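(* Let $\langle E,\rightarrow\rangle$ be a computation and $b$ a regular predicate. For events $e,f$, $J_b(e)\subseteq J_b(f)$ if and only if there is a directed path from $e$ to $f$ in the graph $S_b(E)$.
   Context: A computation is a directed graph $\langle E, \rightarrow\rangle$ whose vertices (events) are partitioned among processes $p_1,\dots,p_n$; events on each process are totally ordered, each process $p_i$ has an initial event $\bot_i$ (first) and final event $\top_i$ (last), the path relation contains Lamport's happened-before relation (in particular there is a path from each event to its successor on the same process), all initial events lie in one strongly connected component and all final events in one strongly connected component. $\top$ is the set of final events and $\mathrm{succ}(e)$ the successor of $e$ on its process. A subset $C\subseteq E$ is a consistent cut if for every edge $(u,v)$, $v\in C$ implies $u\in C$. A predicate is regular if whenever consistent cuts $C_1,C_2$ satisfy it, so do $C_1\cap C_2$ and $C_1\cup C_2$ (trivial cuts $\emptyset,E$ treated as satisfying $b$). $J_b(e)$ is the least consistent cut of $\langle E,\rightarrow\rangle$ that satisfies $b$ and contains $e$, or $E$ if none exists or $e\in\top$. $F_b(e)$ is the vector whose $i$-th entry is the earliest event $g$ on $p_i$ with $J_b(e)\subseteq J_b(g)$. The graph $S_b(E)$ has vertex set $E$ and edges: from each $e\notin\top$ to $\mathrm{succ}(e)$, and from each event $e$ to $F_b(e)[i]$ for each process $p_i$. Each vertex has a (trivial) path to itself. *)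

theory Defs
  imports Main
begin

text \<open>A computation: a finite nonempty set P of processes; process i has events
  ev i 0, ..., ev i (len i - 1) in process order (ev i 0 is the initial event,
  ev i (len i - 1) the final event). R is the edge relation of the graph.\<close>

definition events :: "'p set \<Rightarrow> ('p \<Rightarrow> nat) \<Rightarrow> ('p \<Rightarrow> nat \<Rightarrow> 'e) \<Rightarrow> 'e set" where
  "events P len ev = {ev i k | i k. i \<in> P \<and> k < len i}"

definition finals :: "'p set \<Rightarrow> ('p \<Rightarrow> nat) \<Rightarrow> ('p \<Rightarrow> nat \<Rightarrow> 'e) \<Rightarrow> 'e set" where
  "finals P len ev = {ev i (len i - 1) | i. i \<in> P}"

definition succ_ev :: "'p set \<Rightarrow> ('p \<Rightarrow> nat) \<Rightarrow> ('p \<Rightarrow> nat \<Rightarrow> 'e) \<Rightarrow> 'e \<Rightarrow> 'e" where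
  "succ_ev P len ev e =
     (THE s. \<exists>i\<in>P. \<exists>k. Suc k < len i \<and> e = ev i k \<and> s = ev i (Suc k))"

definition computation ::
  "'p set \<Rightarrow> ('p \<Rightarrow> nat) \<Rightarrow> ('p \<Rightarrow> nat \<Rightarrow> 'e) \<Rightarrow> ('e \<times> 'e) set \<Rightarrow> bool" where
  "computation P len ev R \<longleftrightarrow>
     finite P \<and> P \<noteq> {} \<and>
     (\<forall>i\<in>P. 1 \<le> len i) \<and>
     (\<forall>i\<in>P. \<forall>j\<in>P. \<forall>k l. k < len i \<longrightarrow> l < len j \<longrightarrow> ev i k = ev j l \<longrightarrow> i = j \<and> k = l) \<and>
     R \<subseteq> events P len ev \<times> events P len ev \<and>
     (\<forall>i\<in>P. \<forall>k. Suc k < len i \<longrightarrow> (ev i k, ev i (Suc k)) \<in> R\<^sup>+) \<and>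
     (\<forall>i\<in>P. \<forall>j\<in>P. (ev i 0, ev j 0) \<in> R\<^sup>*) \<and>
     (\<forall>i\<in>P. \<forall>j\<in>P. (ev i (len i - 1), ev j (len j - 1)) \<in> R\<^sup>*)"

definition consistent_cut :: "'e set \<Rightarrow> ('e \<times> 'e) set \<Rightarrow> 'e set \<Rightarrow> bool" where
  "consistent_cut E R C \<longleftrightarrow> C \<subseteq> E \<and> (\<forall>(u, v) \<in> R. v \<in> C \<longrightarrow> u \<in> C)"

text \<open>Satisfaction of b, with the trivial cuts treated as satisfying b.\<close>
definition sat :: "'e set \<Rightarrow> ('e set \<Rightarrow> bool) \<Rightarrow> 'e set \<Rightarrow> bool" where
  "sat E b C \<longleftrightarrow> C = {} \<or> C = E \<or> b C"

definition regular :: "'e set \<Rightarrow> ('e \<times> 'e) set \<Rightarrow> ('e set \<Rightarrow> bool) \<Rightarrow> bool" where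
  "regular E R b \<longleftrightarrow>
     (\<forall>C1 C2. consistent_cut E R C1 \<and> consistent_cut E R C2 \<and> sat E b C1 \<and> sat E b C2
        \<longrightarrow> sat E b (C1 \<inter> C2) \<and> sat E b (C1 \<union> C2))"

definition least_cut :: "'e set \<Rightarrow> ('e \<times> 'e) set \<Rightarrow> ('e set \<Rightarrow> bool) \<Rightarrow> 'e \<Rightarrow> 'e set \<Rightarrow> bool" where
  "least_cut E R b e C \<longleftrightarrow>
     consistent_cut E R C \<and> sat E b C \<and> e \<in> C \<and>
     (\<forall>C'. consistent_cut E R C' \<and> sat E b C' \<and> e \<in> C' \<longrightarrow> C \<subseteq> C')"

definition Jb :: "'p set \<Rightarrow> ('p \<Rightarrow> nat) \<Rightarrow> ('p \<Rightarrow> nat \<Rightarrow> 'e) \<Rightarrow> ('e \<times> 'e) set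
                    \<Rightarrow> ('e set \<Rightarrow> bool) \<Rightarrow> 'e \<Rightarrow> 'e set" where
  "Jb P len ev R b e =
     (let E = events P len ev in
      if e \<in> finals P len ev \<or> \<not> (\<exists>C. least_cut E R b e C) then E
      else (THE C. least_cut E R b e C))"

definition Fb :: "'p set \<Rightarrow> ('p \<Rightarrow> nat) \<Rightarrow> ('p \<Rightarrow> nat \<Rightarrow> 'e) \<Rightarrow> ('e \<times> 'e) set
                    \<Rightarrow> ('e set \<Rightarrow> bool) \<Rightarrow> 'e \<Rightarrow> 'p \<Rightarrow> 'e" where
  "Fb P len ev R b e i =
     ev i (LEAST k. k < len i \<and> Jb P len ev R b e \<subseteq> Jb P len ev R b (ev i k))"

definition Sb :: "'p set \<Rightarrow> ('p \<Rightarrow> nat) \<Rightarrow> ('p \<Rightarrow> nat \<Rightarrow> 'e) \<Rightarrow> ('e \<times> 'e) set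
                    \<Rightarrow> ('e set \<Rightarrow> bool) \<Rightarrow> ('e \<times> 'e) set" where
  "Sb P len ev R b =
     {(e, succ_ev P len ev e) | e. e \<in> events P len ev \<and> e \<notin> finals P len ev}
     \<union> {(e, Fb P len ev R b e i) | e i. e \<in> events P len ev \<and> i \<in> P}"

end

theory Submission
  imports Defs
begin

lemma events_finite:
  assumes "finite P" shows "finite (events P len ev)"
proof -
  have "events P len ev \<subseteq> (\<Union>i\<in>P. (\<lambda>k. ev i k) ` {..<len i})"
    unfolding events_def by auto
  moreover have "finite (\<Union>i\<in>P. (\<lambda>k. ev i k) ` {..<len i})" using assms by auto
  ultimately show ?thesis by (rule finite_subset)
qed

lemma cut_trancl:
  assumes "consistent_cut E R C" "(u, v) \<in> R\<^sup>+" "v \<in> C"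
  shows "u \<in> C"
  using assms(2,3)
proof (induction rule: converse_trancl_induct)
  case (base y)
  then show ?case using assms(1) unfolding consistent_cut_def by blast
next
  case (step y z)
  then show ?case using assms(1) unfolding consistent_cut_def by blast
qed

lemma least_ex:
  assumes comp: "computation P len ev R"
    and reg: "regular (events P len ev) R b"
    and e: "e \<in> events P len ev"
  shows "\<exists>C. least_cut (events P len ev) R b e C"
proof -
  let ?E = "events P len ev"
  let ?F = "\<lambda>C. consistent_cut ?E R C \<and> sat ?E b C \<and> e \<in> C"
  have finE: "finite ?E" using comp events_finite unfolding computation_def by blast
  have "?F ?E" using e comp unfolding consistent_cut_def sat_def computation_def by auto
  then obtain C where C: "?F C" and min: "\<forall>C'. ?F C' \<longrightarrow> card C \<le> card C'"
    using ex_has_least_nat[of ?F ?E card] by blast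
  have "C \<subseteq> C'" if C': "?F C'" for C'
  proof -
    have "sat ?E b (C \<inter> C')" using reg C C' unfolding regular_def by blast
    moreover have "consistent_cut ?E R (C \<inter> C')"
      using C C' unfolding consistent_cut_def by blast
    ultimately have "?F (C \<inter> C')" using C C' by blast
    hence "card C \<le> card (C \<inter> C')" using min by blast
    moreover have "finite C" using C finE unfolding consistent_cut_def
      using finite_subset by blast
    ultimately have "C \<inter> C' = C"
      by (metis card_seteq inf_le1 finite_subset)
    thus ?thesis by blast
  qed
  thus ?thesis using C unfolding least_cut_def by blast
qed

lemma least_unique:
  "least_cut E R b e C \<Longrightarrow> least_cut E R b e C' \<Longrightarrow> C = C'"
  unfolding least_cut_def by blast

lemma J_least:
  assumes comp: "computation P len ev R"
    and reg: "regular (events P len ev) R b"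
    and e: "e \<in> events P len ev" and nf: "e \<notin> finals P len ev"
  shows "least_cut (events P len ev) R b e (Jb P len ev R b e)"
proof -
  obtain C where C: "least_cut (events P len ev) R b e C" using least_ex[OF comp reg e] by blast
  have "Jb P len ev R b e = C"
  proof -
    have "(THE C'. least_cut (events P len ev) R b e C') = C"
      using C least_unique by (metis (no_types) the_equality)
    thus ?thesis unfolding Jb_def Let_def using nf C by auto
  qed
  thus ?thesis using C by simp
qed

lemma J_sub:
  "Jb P len ev R b x \<subseteq> events P len ev"
proof (cases "x \<in> finals P len ev \<or> \<not> (\<exists>C. least_cut (events P len ev) R b x C)")
  case True
  then show ?thesis unfolding Jb_def Let_def by simp
next
  case False
  then obtain C where C: "least_cut (events P len ev) R b x C" by blast
  have "Jb P len ev R b x = C"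
  proof -
    have "(THE C'. least_cut (events P len ev) R b x C') = C"
      using C least_unique by (metis (no_types) the_equality)
    thus ?thesis unfolding Jb_def Let_def using False C by auto
  qed
  then show ?thesis using C unfolding least_cut_def consistent_cut_def by simp
qed

lemma J_final:
  "x \<in> finals P len ev \<Longrightarrow> Jb P len ev R b x = events P len ev"
  unfolding Jb_def Let_def by simp

lemma inj_ev:
  assumes "computation P len ev R" "i \<in> P" "j \<in> P" "k < len i" "l < len j" "ev i k = ev j l"
  shows "i = j \<and> k = l"
  using assms unfolding computation_def by blast

lemma succ_ev_eq:
  assumes comp: "computation P len ev R" and i: "i \<in> P" and k: "Suc k < len i"
  shows "succ_ev P len ev (ev i k) = ev i (Suc k)"
  unfolding succ_ev_def
proof (rule the_equality)
  show "\<exists>j\<in>P. \<exists>l. Suc l < len j \<and> ev i k = ev j l \<and> ev i (Suc k) = ev j (Suc l)"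
    using i k by blast
next
  fix s assume "\<exists>j\<in>P. \<exists>l. Suc l < len j \<and> ev i k = ev j l \<and> s = ev j (Suc l)"
  then obtain j l where "j \<in> P" "Suc l < len j" "ev i k = ev j l" "s = ev j (Suc l)" by blast
  with inj_ev[OF comp i \<open>j \<in> P\<close>, of k l] k show "s = ev i (Suc k)" by auto
qed

lemma not_final:
  assumes comp: "computation P len ev R" and i: "i \<in> P" and k: "Suc k < len i"
  shows "ev i k \<notin> finals P len ev"
proof
  assume "ev i k \<in> finals P len ev"
  then obtain j where j: "j \<in> P" "ev i k = ev j (len j - 1)" unfolding finals_def by blast
  have "1 \<le> len j" using comp j unfolding computation_def by blast
  then have "len j - 1 < len j" by simp
  with inj_ev[OF comp i j(1), of k "len j - 1"] j k show False by auto
qed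

lemma succ_mono:
  assumes comp: "computation P len ev R"
    and reg: "regular (events P len ev) R b"
    and i: "i \<in> P" and k: "Suc k < len i"
  shows "Jb P len ev R b (ev i k) \<subseteq> Jb P len ev R b (ev i (Suc k))"
proof (cases "ev i (Suc k) \<in> finals P len ev")
  case True
  then show ?thesis using J_final J_sub by metis
next
  case False
  have eE: "ev i k \<in> events P len ev" "ev i (Suc k) \<in> events P len ev"
    using i k unfolding events_def by (blast dest: Suc_lessD)+
  have L1: "least_cut (events P len ev) R b (ev i (Suc k)) (Jb P len ev R b (ev i (Suc k)))"
    using J_least[OF comp reg eE(2) False] .
  have L0: "least_cut (events P len ev) R b (ev i k) (Jb P len ev R b (ev i k))"
    using J_least[OF comp reg eE(1) not_final[OF comp i k]] .
  have "(ev i k, ev i (Suc k)) \<in> R\<^sup>+" using comp i k unfolding computation_def by blast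
  hence "ev i k \<in> Jb P len ev R b (ev i (Suc k))"
    using L1 cut_trancl unfolding least_cut_def by metis
  then show ?thesis using L0 L1 unfolding least_cut_def by blast
qed

lemma Fb_prop:
  assumes comp: "computation P len ev R" and i: "i \<in> P"
  shows "\<exists>m. Fb P len ev R b e i = ev i m \<and> m < len i \<and>
     Jb P len ev R b e \<subseteq> Jb P len ev R b (ev i m) \<and>
     (\<forall>k. k < len i \<and> Jb P len ev R b e \<subseteq> Jb P len ev R b (ev i k) \<longrightarrow> m \<le> k)"
proof -
  let ?Q = "\<lambda>k. k < len i \<and> Jb P len ev R b e \<subseteq> Jb P len ev R b (ev i k)"
  have "1 \<le> len i" using comp i unfolding computation_def by blast
  hence "ev i (len i - 1) \<in> finals P len ev" using i unfolding finals_def by blast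
  hence "?Q (len i - 1)" using \<open>1 \<le> len i\<close> J_final J_sub by (metis diff_less zero_less_one less_le_trans)
  hence "?Q (LEAST k. ?Q k)" by (rule LeastI)
  moreover have "\<forall>k. ?Q k \<longrightarrow> (LEAST k. ?Q k) \<le> k" by (auto intro: Least_le)
  ultimately show ?thesis unfolding Fb_def by blast
qed

lemma edge_mono:
  assumes comp: "computation P len ev R"
    and reg: "regular (events P len ev) R b"
    and xy: "(x, y) \<in> Sb P len ev R b"
  shows "Jb P len ev R b x \<subseteq> Jb P len ev R b y"
  using xy unfolding Sb_def
proof (elim UnE CollectE exE conjE)
  fix e assume h: "(x, y) = (e, succ_ev P len ev e)" "e \<in> events P len ev" "e \<notin> finals P len ev"
  then obtain i k where ik: "i \<in> P" "k < len i" "e = ev i k" unfolding events_def by blast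
  have "Suc k < len i"
  proof (rule ccontr)
    assume "\<not> Suc k < len i"
    hence "k = len i - 1" using ik by simp
    thus False using h ik unfolding finals_def by blast
  qed
  then show ?thesis using h ik succ_ev_eq[OF comp ik(1)] succ_mono[OF comp reg ik(1)] by auto
next
  fix e i assume h: "(x, y) = (e, Fb P len ev R b e i)" "e \<in> events P len ev" "i \<in> P"
  then show ?thesis using Fb_prop[OF comp h(3), of b e] by auto
qed

lemma chain:
  assumes comp: "computation P len ev R" and i: "i \<in> P"
  shows "m \<le> k \<Longrightarrow> k < len i \<Longrightarrow> (ev i m, ev i k) \<in> (Sb P len ev R b)\<^sup>*"
proof (induction k)
  case 0
  then show ?case by simp
next
  case (Suc k)
  show ?case
  proof (cases "m = Suc k")
    case True
    then show ?thesis by simp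
  next
    case False
    with Suc have IH: "(ev i m, ev i k) \<in> (Sb P len ev R b)\<^sup>*" by simp
    have "(ev i k, ev i (Suc k)) \<in> Sb P len ev R b"
    proof -
      have "k < len i" using Suc by simp
      hence "ev i k \<in> events P len ev" using i unfolding events_def by blast
      moreover have "ev i k \<notin> finals P len ev" using not_final[OF comp i] Suc by blast
      ultimately have "(ev i k, succ_ev P len ev (ev i k)) \<in> Sb P len ev R b"
        unfolding Sb_def by blast
      thus ?thesis using succ_ev_eq[OF comp i] Suc by simp
    qed
    with IH show ?thesis by simp
  qed
qed

theorem lemma7:
  fixes P :: "'p set" and len :: "'p \<Rightarrow> nat" and ev :: "'p \<Rightarrow> nat \<Rightarrow> 'e"
    and R :: "('e \<times> 'e) set" and b :: "'e set \<Rightarrow> bool" and e f :: 'e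
  assumes "computation P len ev R"
    and "regular (events P len ev) R b"
    and "e \<in> events P len ev" and "f \<in> events P len ev"
  shows "Jb P len ev R b e \<subseteq> Jb P len ev R b f \<longleftrightarrow> (e, f) \<in> (Sb P len ev R b)\<^sup>*"
proof
  assume sub: "Jb P len ev R b e \<subseteq> Jb P len ev R b f"
  obtain i k where ik: "i \<in> P" "k < len i" "f = ev i k" using assms(4) unfolding events_def by blast
  obtain m where m: "Fb P len ev R b e i = ev i m" "m < len i"
     "\<forall>k. k < len i \<and> Jb P len ev R b e \<subseteq> Jb P len ev R b (ev i k) \<longrightarrow> m \<le> k"
    using Fb_prop[OF assms(1) ik(1), of b e] by blast
  have "m \<le> k" using m(3) ik sub by blast
  have "(e, Fb P len ev R b e i) \<in> Sb P len ev R b" using assms(3) ik(1) unfolding Sb_def by blast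
  hence "(e, ev i m) \<in> Sb P len ev R b" using m(1) by simp
  moreover have "(ev i m, f) \<in> (Sb P len ev R b)\<^sup>*"
    using chain[OF assms(1) ik(1) \<open>m \<le> k\<close> ik(2)] ik(3) by simp
  ultimately show "(e, f) \<in> (Sb P len ev R b)\<^sup>*" by simp
next
  assume "(e, f) \<in> (Sb P len ev R b)\<^sup>*"
  then show "Jb P len ev R b e \<subseteq> Jb P len ev R b f"
    by (induction rule: rtrancl_induct) (use edge_mono[OF assms(1,2)] in blast)+
qed

end
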